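(* Let $B>4$ and $U\ge 1$ be integers, let $N_0\ge 0$ and $E_s>0$, and let $\mathbf{H}\in\mathbb{C}^{B\times U}$ have i.i.d.\ circularly symmetric complex Gaussian entries with zero mean and unit variance. Let $\mathbf{A}=\mathbf{H}^H\mathbf{H}+N_0E_s^{-1}\mathbf{I}_U$, let $\mathbf{D}$ be the diagonal matrix with the same diagonal as $\mathbf{A}$, and let $\mathbf{E}=\mathbf{A}-\mathbf{D}$. Then for every integer $K\ge 1$ and every $\alpha>0$, \[ \Pr\left\{\|\mathbf{D}^{-1}\mathbf{E}\|_F^K<\alpha\right\}\;\ge\;1-\frac{U^2-U}{\alpha^{2/K}}\sqrt{\frac{2B(B+1)}{(B-1)(B-2)(B-3)(B-4)}}. \]
   Context: $\|\cdot\|_F$ denotes the Frobenius norm and $\mathbf{H}^H$ the conjugate transpose. The diagonal entries of $\mathbf{A}$ are almost surely positive, so $\mathbf{D}$ is almost surely invertible. $\mathbf{E}$ is the "hollow" part of $\mathbf{A}$ (zero diagonal, off-diagonal entries equal to those of $\mathbf{A}$). *)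

theory Defs
  imports "HOL-Probability.Probability"
begin

text \<open>Matrices of size m x n are represented as functions nat => nat => complex,
  only the entries with row index < m and column index < n being relevant.\<close>

text \<open>Density of the circularly symmetric complex Gaussian CN(0,1) with respect to
  Lebesgue measure on the complex plane (identified with R^2).\<close>
definition cgauss_density :: "complex \<Rightarrow> ennreal" where
  "cgauss_density z = ennreal (exp (- (cmod z)\<^sup>2) / pi)"

definition reg_gram :: "nat \<Rightarrow> real \<Rightarrow> (nat \<Rightarrow> nat \<Rightarrow> complex) \<Rightarrow> nat \<Rightarrow> nat \<Rightarrow> complex" where
  "reg_gram B c H u v = (\<Sum>b<B. cnj (H b u) * H b v) + (if u = v then complex_of_real c else 0)"

definition diag_part :: "(nat \<Rightarrow> nat \<Rightarrow> complex) \<Rightarrow> nat \<Rightarrow> nat \<Rightarrow> complex" where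
  "diag_part A u v = (if u = v then A u u else 0)"

definition hollow_part :: "(nat \<Rightarrow> nat \<Rightarrow> complex) \<Rightarrow> nat \<Rightarrow> nat \<Rightarrow> complex" where
  "hollow_part A u v = A u v - diag_part A u v"

definition diag_inv :: "(nat \<Rightarrow> nat \<Rightarrow> complex) \<Rightarrow> nat \<Rightarrow> nat \<Rightarrow> complex" where
  "diag_inv D u v = (if u = v then inverse (D u u) else 0)"

definition sq_mult :: "nat \<Rightarrow> (nat \<Rightarrow> nat \<Rightarrow> complex) \<Rightarrow> (nat \<Rightarrow> nat \<Rightarrow> complex) \<Rightarrow> nat \<Rightarrow> nat \<Rightarrow> complex" where
  "sq_mult n X Y i j = (\<Sum>k<n. X i k * Y k j)"

definition frob_norm :: "nat \<Rightarrow> nat \<Rightarrow> (nat \<Rightarrow> nat \<Rightarrow> complex) \<Rightarrow> real" where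
  "frob_norm m n X = sqrt (\<Sum>i<m. \<Sum>j<n. (cmod (X i j))\<^sup>2)"

end

theory Submission
  imports Defs "HOL-Real_Asymp.Real_Asymp"
begin
lemma gauss_nn_aux:
  assumes a: "(a::real) > 0"
  shows "(\<integral>\<^sup>+x. ennreal (exp (- a * x\<^sup>2)) \<partial>lborel) = ennreal (sqrt (pi / a))"
    and "(\<integral>\<^sup>+x. ennreal (x\<^sup>2 * exp (- a * x\<^sup>2)) \<partial>lborel) = ennreal (sqrt (pi / a) / (2 * a))"
proof -
  define \<sigma> where "\<sigma> = sqrt (1 / (2 * a))"
  have s: "\<sigma> > 0" using a by (simp add: \<sigma>_def)
  have s2: "\<sigma>\<^sup>2 = 1 / (2*a)" using a by (simp add: \<sigma>_def)
  have eq: "exp (- a * x\<^sup>2) = sqrt (pi / a) * normal_density 0 \<sigma> x" for x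
    unfolding normal_density_def s2 using a
    by (simp add: field_simps real_sqrt_divide)
  have hb0: "has_bochner_integral lborel (\<lambda>x. normal_density 0 \<sigma> x * (x - 0) ^ (2 * 0)) (fact (2 * 0) / ((2 / \<sigma>\<^sup>2)^0 * fact 0))"
    by (rule normal_moment_even[OF s])
  have hb1: "has_bochner_integral lborel (\<lambda>x. normal_density 0 \<sigma> x * (x - 0) ^ (2 * 1)) (fact (2 * 1) / ((2 / \<sigma>\<^sup>2)^1 * fact 1))"
    by (rule normal_moment_even[OF s])
  have n0: "(\<integral>\<^sup>+x. ennreal (normal_density 0 \<sigma> x) \<partial>lborel) = ennreal 1"
    using hb0 by (subst nn_integral_eq_integral) (auto simp: has_bochner_integral_iff)
  have n1: "(\<integral>\<^sup>+x. ennreal (normal_density 0 \<sigma> x * x\<^sup>2) \<partial>lborel) = ennreal (\<sigma>\<^sup>2)"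
    using hb1 by (subst nn_integral_eq_integral) (auto simp: has_bochner_integral_iff)
  have "(\<integral>\<^sup>+x. ennreal (exp (- a * x\<^sup>2)) \<partial>lborel) = (\<integral>\<^sup>+x. ennreal (sqrt (pi / a)) * ennreal (normal_density 0 \<sigma> x) \<partial>lborel)"
    unfolding eq using a by (intro nn_integral_cong) (simp add: ennreal_mult)
  also have "\<dots> = ennreal (sqrt (pi / a))"
    by (subst nn_integral_cmult) (auto simp: n0)
  finally show "(\<integral>\<^sup>+x. ennreal (exp (- a * x\<^sup>2)) \<partial>lborel) = ennreal (sqrt (pi / a))" .
  have "(\<integral>\<^sup>+x. ennreal (x\<^sup>2 * exp (- a * x\<^sup>2)) \<partial>lborel) = (\<integral>\<^sup>+x. ennreal (sqrt (pi / a)) * ennreal (normal_density 0 \<sigma> x * x\<^sup>2) \<partial>lborel)"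
    unfolding eq using a by (intro nn_integral_cong) (simp add: ennreal_mult[symmetric] mult_ac)
  also have "\<dots> = ennreal (sqrt (pi / a)) * ennreal (\<sigma>\<^sup>2)"
    by (subst nn_integral_cmult) (auto simp: n1)
  also have "\<dots> = ennreal (sqrt (pi / a) / (2 * a))"
    using a by (simp add: s2 ennreal_mult[symmetric])
  finally show "(\<integral>\<^sup>+x. ennreal (x\<^sup>2 * exp (- a * x\<^sup>2)) \<partial>lborel) = ennreal (sqrt (pi / a) / (2 * a))" .
qed

lemma prod_Basis_complex: "(\<Prod>b\<in>(Basis::complex set). f b) = f 1 * f \<i>"
  by (simp add: Basis_complex_def)

lemma cgauss_nn:
  assumes s: "(s::real) \<ge> 0"
  shows "(\<integral>\<^sup>+z. cgauss_density z * ennreal (exp (- (s * (cmod z)\<^sup>2))) \<partial>lborel) = ennreal (1 / (1 + s))"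
    and "(\<integral>\<^sup>+z. cgauss_density z * ennreal ((cmod z)\<^sup>2 * exp (- (s * (cmod z)\<^sup>2))) \<partial>lborel) = ennreal (1 / (1 + s)^2)"
proof -
  define a where "a = 1 + s"
  have a: "a > 0" using s by (simp add: a_def)
  note I = gauss_nn_aux[OF a]
  define f where "f = (\<lambda>(b::complex) x::real. ennreal (exp (- a * x\<^sup>2) / sqrt pi))"
  define g where "g = (\<lambda>(b::complex) x::real. ennreal ((if b = 1 then x\<^sup>2 else 1) * exp (- a * x\<^sup>2) / sqrt pi))"
  define h where "h = (\<lambda>(b::complex) x::real. ennreal ((if b = \<i> then x\<^sup>2 else 1) * exp (- a * x\<^sup>2) / sqrt pi))"
  have sq: "sqrt pi * sqrt pi = pi" by simp
  have pf: "cgauss_density z * ennreal (exp (- (s * (cmod z)\<^sup>2))) = (\<Prod>b\<in>Basis. f b (z \<bullet> b))" for z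
    unfolding prod_Basis_complex f_def cgauss_density_def
    by (simp add: ennreal_mult[symmetric] inner_complex_def cmod_power2 a_def mult_exp_exp
          field_simps del: ennreal_mult_eq_top_iff)
  have "(\<integral>\<^sup>+z. cgauss_density z * ennreal (exp (- (s * (cmod z)\<^sup>2))) \<partial>lborel) = (\<Prod>b\<in>Basis. (\<integral>\<^sup>+x. f b x \<partial>lborel))"
    unfolding pf by (rule nn_integral_lborel_prod) (auto simp: f_def)
  also have "\<dots> = ennreal (sqrt (pi/a) / sqrt pi) * ennreal (sqrt (pi/a) / sqrt pi)"
    unfolding prod_Basis_complex f_def using I(1)
    apply (simp add: divide_ennreal[symmetric] nn_integral_divide)
    using a by (simp add: divide_ennreal)
  also have "\<dots> = ennreal (1 / (1 + s))"
    using a by (simp add: ennreal_mult[symmetric] real_sqrt_divide a_def field_simps)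
  finally show "(\<integral>\<^sup>+z. cgauss_density z * ennreal (exp (- (s * (cmod z)\<^sup>2))) \<partial>lborel) = ennreal (1 / (1 + s))" .
  have pg: "cgauss_density z * ennreal ((cmod z)\<^sup>2 * exp (- (s * (cmod z)\<^sup>2))) = (\<Prod>b\<in>Basis. g b (z \<bullet> b)) + (\<Prod>b\<in>Basis. h b (z \<bullet> b))" for z
    unfolding prod_Basis_complex g_def h_def cgauss_density_def
    by (simp add: ennreal_mult[symmetric] ennreal_plus[symmetric] inner_complex_def cmod_power2 a_def mult_exp_exp
          field_simps del: ennreal_mult_eq_top_iff ennreal_plus)
  have "(\<integral>\<^sup>+z. cgauss_density z * ennreal ((cmod z)\<^sup>2 * exp (- (s * (cmod z)\<^sup>2))) \<partial>lborel)
     = (\<integral>\<^sup>+z. (\<Prod>b\<in>Basis. g b (z \<bullet> b)) \<partial>lborel) + (\<integral>\<^sup>+z. (\<Prod>b\<in>Basis. h b (z \<bullet> b)) \<partial>lborel)"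
    unfolding pg by (rule nn_integral_add) (auto simp: g_def h_def)
  also have "\<dots> = (\<Prod>b\<in>Basis. (\<integral>\<^sup>+x. g b x \<partial>lborel)) + (\<Prod>b\<in>Basis. (\<integral>\<^sup>+x. h b x \<partial>lborel))"
    by (subst nn_integral_lborel_prod, (auto simp: g_def h_def)[2])+ (rule refl)
  also have "\<dots> = ennreal (sqrt (pi/a) / (2*a) / sqrt pi) * ennreal (sqrt (pi/a) / sqrt pi)
      + ennreal (sqrt (pi/a) / sqrt pi) * ennreal (sqrt (pi/a) / (2*a) / sqrt pi)"
    unfolding prod_Basis_complex g_def h_def using I
    apply (simp add: divide_ennreal[symmetric] nn_integral_divide)
    using a by (simp add: divide_ennreal)
  also have "\<dots> = ennreal (1 / (1 + s)^2)"
  proof -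
    have q: "sqrt a * sqrt a = a" using a by simp
    have pi: "sqrt pi > 0" by simp
    have e: "sqrt (pi/a) / (2*a) / sqrt pi * (sqrt (pi/a) / sqrt pi) + sqrt (pi/a) / sqrt pi * (sqrt (pi/a) / (2*a) / sqrt pi) = 1 / (1+s)^2"
    proof -
      have "sqrt (pi/a) / (2*a) / sqrt pi * (sqrt (pi/a) / sqrt pi) + sqrt (pi/a) / sqrt pi * (sqrt (pi/a) / (2*a) / sqrt pi) = 1 / (a * a)"
        using a pi by (simp add: real_sqrt_divide field_simps q)
      then show ?thesis by (simp add: a_def power2_eq_square)
    qed
    show ?thesis unfolding e[symmetric] using a
      by (simp add: ennreal_mult[symmetric] ennreal_plus[symmetric] del: ennreal_plus)
  qed
  finally show "(\<integral>\<^sup>+z. cgauss_density z * ennreal ((cmod z)\<^sup>2 * exp (- (s * (cmod z)\<^sup>2))) \<partial>lborel) = ennreal (1 / (1 + s)^2)" .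
qed

definition cg :: "complex \<Rightarrow> real" where "cg z = exp (- (cmod z)\<^sup>2) / pi"

lemma cgauss_density_cg: "cgauss_density = (\<lambda>z. ennreal (cg z))"
  by (simp add: fun_eq_iff cgauss_density_def cg_def)

lemma cg_nonneg: "0 \<le> cg z" by (simp add: cg_def)

lemma cg_meas[measurable]: "cg \<in> borel_measurable borel"
  unfolding cg_def by measurable

abbreviation "GM \<equiv> density lborel cgauss_density"

lemma GM_nn:
  assumes [measurable]: "f \<in> borel_measurable borel"
  shows "(\<integral>\<^sup>+z. f z \<partial>GM) = (\<integral>\<^sup>+z. cgauss_density z * f z \<partial>lborel)"
  unfolding cgauss_density_cg by (subst nn_integral_density) auto

lemma GM_exp:
  assumes s: "(s::real) \<ge> 0"
  shows "has_bochner_integral GM (\<lambda>z. exp (- (s * (cmod z)\<^sup>2))) (1 / (1 + s))"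
  apply (rule has_bochner_integral_nn_integral)
  using s apply (auto simp: GM_nn cgauss_nn(1)[OF s])
  done

lemma GM_sq_exp:
  assumes s: "(s::real) \<ge> 0"
  shows "has_bochner_integral GM (\<lambda>z. (cmod z)\<^sup>2 * exp (- (s * (cmod z)\<^sup>2))) (1 / (1 + s)^2)"
  apply (rule has_bochner_integral_nn_integral)
  using s apply (auto simp: GM_nn cgauss_nn(2)[OF s])
  done

lemma GM_int_bound: "integrable GM (\<lambda>z. 1 + (cmod z)\<^sup>2)"
  using GM_exp[of 0] GM_sq_exp[of 0] by (auto simp: has_bochner_integral_iff)

lemma GM_integrable:
  assumes [measurable]: "f \<in> borel_measurable borel"
    and b: "\<And>z. norm (f z :: complex) \<le> 1 + (cmod z)\<^sup>2"
  shows "integrable GM f"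
  by (rule Bochner_Integration.integrable_bound[OF GM_int_bound]) (auto intro: order.trans[OF b])

lemma GM_mean0: "(\<integral>z. z \<partial>GM) = 0"
proof -
  have L: "lborel = distr lborel borel (uminus :: complex \<Rightarrow> complex)"
    using lborel_affine[of "-1" "0::complex"] by (simp add: density_1)
  have "(\<integral>z. z \<partial>GM) = (\<integral>z. cg z *\<^sub>R z \<partial>lborel)"
    unfolding cgauss_density_cg by (subst integral_density) (auto simp: cg_nonneg)
  also have "\<dots> = (\<integral>z. cg z *\<^sub>R z \<partial>distr lborel borel uminus)"
    by (subst L[symmetric]) simp
  also have "\<dots> = (\<integral>z. cg (-z) *\<^sub>R (-z) \<partial>lborel)"
    by (subst integral_distr) auto
  also have "\<dots> = - (\<integral>z. cg z *\<^sub>R z \<partial>lborel)"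
    by (simp add: cg_def)
  finally have "(\<integral>z. cg z *\<^sub>R z \<partial>lborel) = - (\<integral>z. cg z *\<^sub>R z \<partial>lborel)"
    using \<open>(\<integral>z. z \<partial>GM) = _\<close> by simp
  then have "(\<integral>z. cg z *\<^sub>R z \<partial>lborel) = (0::complex)" by simp
  then show ?thesis unfolding cgauss_density_cg by (subst integral_density) (auto simp: cg_nonneg)
qed

context
  fixes M :: "'a measure" and H :: "'a \<Rightarrow> nat \<Rightarrow> nat \<Rightarrow> complex" and B U :: nat
  assumes P: "prob_space M"
    and IND: "prob_space.indep_vars M (\<lambda>_. borel) (\<lambda>(b, u) \<omega>. H \<omega> b u) ({..<B} \<times> {..<U})"
    and DIS: "\<And>b u. b < B \<Longrightarrow> u < U \<Longrightarrow> distributed M lborel (\<lambda>\<omega>. H \<omega> b u) cgauss_density"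
begin

interpretation prob_space M by (rule P)

lemma Hmeas: "b < B \<Longrightarrow> u < U \<Longrightarrow> (\<lambda>\<omega>. H \<omega> b u) \<in> borel_measurable M"
  using distributed_measurable[OF DIS] by simp

lemma Hdistr: "b < B \<Longrightarrow> u < U \<Longrightarrow> distr M lborel (\<lambda>\<omega>. H \<omega> b u) = GM"
  using distributed_distr_eq_density[OF DIS] by simp

lemma H_integral:
  assumes "b < B" "u < U" and [measurable]: "f \<in> borel_measurable borel"
  shows "(\<integral>\<omega>. f (H \<omega> b u) \<partial>M) = (\<integral>z. (f z :: complex) \<partial>GM)"
    and "integrable M (\<lambda>\<omega>. f (H \<omega> b u)) \<longleftrightarrow> integrable GM f"
proof -
  have m: "(\<lambda>\<omega>. H \<omega> b u) \<in> measurable M lborel" using Hmeas[OF assms(1,2)] by simp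
  show "(\<integral>\<omega>. f (H \<omega> b u) \<partial>M) = (\<integral>z. (f z :: complex) \<partial>GM)"
    using integral_distr[OF m, of f] Hdistr[OF assms(1,2)] by simp
  show "integrable M (\<lambda>\<omega>. f (H \<omega> b u)) \<longleftrightarrow> integrable GM f"
    using integrable_distr_eq[OF m, of f] Hdistr[OF assms(1,2)] by simp
qed

end

definition FF :: "real \<Rightarrow> nat \<Rightarrow> nat \<Rightarrow> nat \<Rightarrow> nat \<times> nat \<Rightarrow> complex \<Rightarrow> complex" where
  "FF t u b b' i z = (if snd i = u
     then (if fst i = b then cnj z else 1) * (if fst i = b' then z else 1) * complex_of_real (exp (- (t * (cmod z)\<^sup>2)))
     else (if fst i = b then z else 1) * (if fst i = b' then cnj z else 1))"

lemma cnj_meas[measurable]: "cnj \<in> borel_measurable borel"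
  by (intro borel_measurable_continuous_onI continuous_intros)

lemma FF_meas[measurable]: "FF t u b b' i \<in> borel_measurable borel"
  unfolding FF_def by (cases "snd i = u"; cases "fst i = b"; cases "fst i = b'") simp_all

lemma cnj_mult_self: "cnj z * z = complex_of_real ((cmod z)\<^sup>2)"
  by (simp only: complex_norm_square mult.commute)

lemma norm_le_1_sq: "cmod z \<le> 1 + (cmod z)\<^sup>2"
proof (cases "cmod z \<le> 1")
  case True then show ?thesis by (smt (verit) zero_le_power2)
next
  case False then have "cmod z * 1 \<le> cmod z * cmod z" by (intro mult_left_mono) auto
  then have "cmod z \<le> (cmod z)\<^sup>2" by (simp add: power2_eq_square)
  then show ?thesis by simp
qed

lemma FF_bound:
  assumes t: "t \<ge> 0"
  shows "norm (FF t u b b' i z) \<le> 1 + (cmod z)\<^sup>2"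
proof -
  have e: "norm (complex_of_real (exp (- (t * (cmod z)\<^sup>2)))) \<le> 1" using t by simp
  have c1: "norm (if P then z else 1) \<le> max 1 (cmod z)" for P by auto
  have c2: "norm (if P then cnj z else 1) \<le> max 1 (cmod z)" for P by auto
  have q: "norm x \<le> max 1 (cmod z) \<Longrightarrow> norm y \<le> max 1 (cmod z) \<Longrightarrow> norm (x * y) \<le> 1 + (cmod z)\<^sup>2" for x y :: complex
  proof -
    assume a: "norm x \<le> max 1 (cmod z)" "norm y \<le> max 1 (cmod z)"
    have "norm (x * y) \<le> max 1 (cmod z) * max 1 (cmod z)"
      unfolding norm_mult by (rule mult_mono) (use a in auto)
    also have "\<dots> \<le> 1 + (cmod z)\<^sup>2" by (auto simp: max_def power2_eq_square)
    finally show ?thesis .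
  qed
  show ?thesis
  proof (cases "snd i = u")
    case True
    have "norm (FF t u b b' i z) = norm ((if fst i = b then cnj z else 1) * (if fst i = b' then z else 1)) * norm (complex_of_real (exp (- (t * (cmod z)\<^sup>2))))"
      using True by (simp add: FF_def norm_mult del: norm_of_real)
    also have "\<dots> \<le> norm ((if fst i = b then cnj z else 1) * (if fst i = b' then z else 1)) * 1"
      by (rule mult_left_mono[OF e]) simp
    also have "\<dots> \<le> 1 + (cmod z)\<^sup>2" using q[OF c2 c1] by simp
    finally show ?thesis .
  next
    case False
    then show ?thesis using q[OF c1 c2] by (simp add: FF_def)
  qed
qed

lemma GM_one: "(\<integral>z. (1::complex) \<partial>GM) = 1"
proof -
  have "(\<integral>z. exp (- 0 * (cmod z)\<^sup>2) \<partial>GM) = 1" using GM_exp[of 0] by (simp add: has_bochner_integral_iff)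
  then have "(\<integral>z. (1::real) \<partial>GM) = 1" by simp
  then have "complex_of_real (\<integral>z. (1::real) \<partial>GM) = 1" by simp
  then show ?thesis by (simp del: integral_complex_of_real add: integral_complex_of_real[symmetric])
qed

lemma FF_E_uu:
  assumes t: "t \<ge> 0"
  shows "(\<integral>z. FF t u b b (b, u) z \<partial>GM) = complex_of_real (1 / (1 + t)^2)"
proof -
  have "FF t u b b (b, u) = (\<lambda>z. complex_of_real ((cmod z)\<^sup>2 * exp (- (t * (cmod z)\<^sup>2))))"
  proof
    fix z
    have "FF t u b b (b, u) z = (cnj z * z) * complex_of_real (exp (- (t * (cmod z)\<^sup>2)))"
      by (simp add: FF_def)
    also have "\<dots> = complex_of_real ((cmod z)\<^sup>2 * exp (- (t * (cmod z)\<^sup>2)))"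
      by (simp only: cnj_mult_self of_real_mult)
    finally show "FF t u b b (b, u) z = complex_of_real ((cmod z)\<^sup>2 * exp (- (t * (cmod z)\<^sup>2)))" .
  qed
  moreover have "(\<integral>z. (cmod z)\<^sup>2 * exp (- (t * (cmod z)\<^sup>2)) \<partial>GM) = 1 / (1 + t)^2"
    using GM_sq_exp[OF t] by (simp add: has_bochner_integral_iff)
  ultimately show ?thesis by (simp only: integral_complex_of_real)
qed

lemma FF_E_ku:
  assumes t: "t \<ge> 0" "k \<noteq> b" "k \<noteq> b'"
  shows "(\<integral>z. FF t u b b' (k, u) z \<partial>GM) = complex_of_real (1 / (1 + t))"
proof -
  have "FF t u b b' (k, u) = (\<lambda>z. complex_of_real (exp (- (t * (cmod z)\<^sup>2))))"
    using t by (auto simp: FF_def fun_eq_iff)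
  then show ?thesis using GM_exp[OF t(1)] by (simp add: has_bochner_integral_iff)
qed

lemma FF_E_bv:
  assumes "v \<noteq> u"
  shows "(\<integral>z. FF t u b b (b, v) z \<partial>GM) = 1"
proof -
  have "FF t u b b (b, v) = (\<lambda>z. complex_of_real ((cmod z)\<^sup>2 * exp (- (0 * (cmod z)\<^sup>2))))"
  proof
    fix z
    have "FF t u b b (b, v) z = cnj z * z"
      using assms by (simp add: FF_def mult.commute)
    also have "\<dots> = complex_of_real ((cmod z)\<^sup>2 * exp (- (0 * (cmod z)\<^sup>2)))"
      by (simp only: cnj_mult_self) simp
    finally show "FF t u b b (b, v) z = complex_of_real ((cmod z)\<^sup>2 * exp (- (0 * (cmod z)\<^sup>2)))" .
  qed
  moreover have "(\<integral>z. (cmod z)\<^sup>2 * exp (- (0 * (cmod z)\<^sup>2)) \<partial>GM) = 1"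
    using GM_sq_exp[of 0] by (simp add: has_bochner_integral_iff)
  ultimately show ?thesis by (simp only: integral_complex_of_real of_real_1)
qed

lemma FF_E_kv:
  assumes "v \<noteq> u" "k \<noteq> b" "k \<noteq> b'"
  shows "(\<integral>z. FF t u b b' (k, v) z \<partial>GM) = 1"
proof -
  have "FF t u b b' (k, v) = (\<lambda>z. 1)"
    using assms by (auto simp: FF_def fun_eq_iff)
  then show ?thesis using GM_one by simp
qed

lemma FF_E_zero:
  assumes "v \<noteq> u" "b \<noteq> b'"
  shows "(\<integral>z. FF t u b b' (b, v) z \<partial>GM) = 0"
proof -
  have "FF t u b b' (b, v) = (\<lambda>z. z)"
    using assms by (auto simp: FF_def fun_eq_iff)
  then show ?thesis using GM_mean0 by simp
qed

lemma prod_pair_split: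
  assumes "u \<noteq> v"
  shows "(\<Prod>i\<in>A \<times> {u, v}. f i) = (\<Prod>k\<in>A. f (k, u) * f (k, v))"
proof -
  have "(\<Prod>i\<in>A \<times> {u, v}. f i) = (\<Prod>k\<in>A. \<Prod>w\<in>{u,v}. f (k, w))"
    unfolding prod.cartesian_product by (simp add: split_def)
  also have "\<dots> = (\<Prod>k\<in>A. f (k, u) * f (k, v))"
    using assms by simp
  finally show ?thesis .
qed

lemma prod_exp_helper:
  "(\<Prod>k\<in>A. complex_of_real (exp (- (t * g k)))) = complex_of_real (exp (- (t * (\<Sum>k\<in>A. g k))))"
proof (cases "finite A")
  case True
  then show ?thesis
    by (simp add: of_real_prod[symmetric] exp_sum[symmetric] sum_distrib_left sum_negf)
qed simp

lemma prod_J: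
  assumes uv: "u \<noteq> v" and b: "b < B" "b' < B"
  shows "(\<Prod>i\<in>{..<B} \<times> {u, v}. FF t u b b' i (h (fst i) (snd i)))
    = cnj (h b u) * h b v * (h b' u * cnj (h b' v)) * complex_of_real (exp (- (t * (\<Sum>k<B. (cmod (h k u))\<^sup>2))))"
proof -
  have "(\<Prod>i\<in>{..<B} \<times> {u, v}. FF t u b b' i (h (fst i) (snd i)))
     = (\<Prod>k<B. ((if k = b then cnj (h k u) else 1) * (if k = b' then h k u else 1) * complex_of_real (exp (- (t * (cmod (h k u))\<^sup>2))))
              * ((if k = b then h k v else 1) * (if k = b' then cnj (h k v) else 1)))"
    using uv by (simp add: prod_pair_split FF_def cong: if_cong)
  also have "\<dots> = cnj (h b u) * h b v * (h b' u * cnj (h b' v)) * complex_of_real (exp (- (t * (\<Sum>k<B. (cmod (h k u))\<^sup>2))))"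
    apply (simp only: prod.distrib)
    using b apply (simp add: prod_exp_helper)
    done
  finally show ?thesis .
qed

lemma sum_expand:
  fixes h :: "nat \<Rightarrow> nat \<Rightarrow> complex"
  shows "complex_of_real ((cmod (\<Sum>b<B. cnj (h b u) * h b v))\<^sup>2 * exp (- (t * (\<Sum>k<B. (cmod (h k u))\<^sup>2))))
    = (\<Sum>b<B. \<Sum>b'<B. cnj (h b u) * h b v * (h b' u * cnj (h b' v)) * complex_of_real (exp (- (t * (\<Sum>k<B. (cmod (h k u))\<^sup>2)))))"
proof -
  let ?S = "\<Sum>b<B. cnj (h b u) * h b v"
  let ?e = "complex_of_real (exp (- (t * (\<Sum>k<B. (cmod (h k u))\<^sup>2))))"
  have "complex_of_real ((cmod ?S)\<^sup>2 * exp (- (t * (\<Sum>k<B. (cmod (h k u))\<^sup>2)))) = (?S * cnj ?S) * ?e"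
    by (simp only: of_real_mult complex_norm_square)
  also have "?S * cnj ?S = (\<Sum>b<B. \<Sum>b'<B. cnj (h b u) * h b v * (h b' u * cnj (h b' v)))"
    by (simp add: sum_product)
  finally show ?thesis by (simp add: sum_distrib_right)
qed

lemma prod_if_eq:
  assumes "b < (B::nat)"
  shows "(\<Prod>k<B. if k = b then x else y) = x * y ^ (B - 1)"
proof -
  have "(\<Prod>k<B. if k = b then x else y) = (if b = b then x else y) * (\<Prod>k\<in>{..<B} - {b}. if k = b then x else y)"
    using assms by (subst prod.remove[of _ b]) auto
  also have "(\<Prod>k\<in>{..<B} - {b}. if k = b then x else y) = (\<Prod>k\<in>{..<B} - {b}. y)"
    by (rule prod.cong) auto
  also have "\<dots> = y ^ (B - 1)" using assms by simp
  finally show ?thesis by simp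
qed

lemma term_val_eq:
  assumes uv: "u \<noteq> v" and t: "t \<ge> 0" and b: "b < B"
  shows "(\<Prod>i\<in>{..<B} \<times> {u, v}. \<integral>z. FF t u b b i z \<partial>GM) = complex_of_real (1 / (1 + t) ^ (B + 1))"
proof -
  have "(\<Prod>i\<in>{..<B} \<times> {u, v}. \<integral>z. FF t u b b i z \<partial>GM)
      = (\<Prod>k<B. (\<integral>z. FF t u b b (k, u) z \<partial>GM) * (\<integral>z. FF t u b b (k, v) z \<partial>GM))"
    using uv by (rule prod_pair_split)
  also have "\<dots> = (\<Prod>k<B. if k = b then complex_of_real (1 / (1 + t)^2) else complex_of_real (1 / (1 + t)))"
    using uv t by (intro prod.cong refl) (auto simp: FF_E_uu FF_E_bv FF_E_ku FF_E_kv)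
  also have "\<dots> = complex_of_real (1 / (1 + t)^2) * complex_of_real (1 / (1 + t)) ^ (B - 1)"
    using b by (rule prod_if_eq)
  also have "\<dots> = complex_of_real (1 / (1 + t) ^ (B + 1))"
  proof -
    have "(1 / (1 + t)^2) * (1 / (1 + t)) ^ (B - 1) = 1 / (1 + t) ^ (B + 1)"
    proof -
      have e: "B + 1 = 2 + (B - 1)" using b by simp
      have "(1/(1+t))^(B+1) = (1/(1+t))^2 * (1/(1+t))^(B-1)" unfolding e power_add ..
      then show ?thesis by (metis power_one_over)
    qed
    then show ?thesis by (metis of_real_mult of_real_power)
  qed
  finally show ?thesis .
qed

lemma term_val_neq:
  assumes uv: "u \<noteq> v" and b: "b < B" "b \<noteq> b'"
  shows "(\<Prod>i\<in>{..<B} \<times> {u, v}. \<integral>z. FF t u b b' i z \<partial>GM) = 0"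
  apply (rule prod_zero)
   apply simp
  apply (rule bexI[of _ "(b, v)"])
  using uv b by (auto simp: FF_E_zero)

context
  fixes M :: "'a measure" and H :: "'a \<Rightarrow> nat \<Rightarrow> nat \<Rightarrow> complex" and B U :: nat
  assumes P: "prob_space M"
    and IND: "prob_space.indep_vars M (\<lambda>_. borel) (\<lambda>(b, u) \<omega>. H \<omega> b u) ({..<B} \<times> {..<U})"
    and DIS: "\<And>b u. b < B \<Longrightarrow> u < U \<Longrightarrow> distributed M lborel (\<lambda>\<omega>. H \<omega> b u) cgauss_density"
begin

interpretation prob_space M by (rule P)

lemmas Hm = Hmeas[OF P IND DIS]
lemmas Hi = H_integral[OF P IND DIS]

lemma term_E:
  assumes uv: "u \<noteq> v" "u < U" "v < U" and t: "t \<ge> 0" and b: "b < B" "b' < B"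
  defines "J \<equiv> {..<B} \<times> {u, v}"
  shows "integrable M (\<lambda>\<omega>. \<Prod>i\<in>J. FF t u b b' i (H \<omega> (fst i) (snd i)))"
    and "(\<integral>\<omega>. (\<Prod>i\<in>J. FF t u b b' i (H \<omega> (fst i) (snd i))) \<partial>M)
          = (\<Prod>i\<in>J. \<integral>z. FF t u b b' i z \<partial>GM)"
proof -
  have JU: "J \<subseteq> {..<B} \<times> {..<U}" using uv by (auto simp: J_def)
  have ind0: "indep_vars (\<lambda>_. borel) (\<lambda>(b, u) \<omega>. H \<omega> b u) J"
    by (rule indep_vars_subset[OF IND JU])
  have ind1: "indep_vars (\<lambda>_. borel) (\<lambda>i \<omega>. FF t u b b' i ((\<lambda>(b, u) \<omega>. H \<omega> b u) i \<omega>)) J"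
    by (rule indep_vars_compose2[OF ind0]) simp
  have ind: "indep_vars (\<lambda>_. borel) (\<lambda>i \<omega>. FF t u b b' i (H \<omega> (fst i) (snd i))) J"
    using ind1 by (simp add: split_def)
  have int: "integrable M (\<lambda>\<omega>. FF t u b b' i (H \<omega> (fst i) (snd i)))" if "i \<in> J" for i
  proof -
    have "fst i < B" "snd i < U" using that JU by auto
    then show ?thesis
      using Hi(2)[of "fst i" "snd i" "FF t u b b' i"] GM_integrable[OF FF_meas FF_bound[OF t]] by simp
  qed
  show "integrable M (\<lambda>\<omega>. \<Prod>i\<in>J. FF t u b b' i (H \<omega> (fst i) (snd i)))"
    by (rule indep_vars_integrable[OF _ ind int]) (simp add: J_def)
  have "(\<integral>\<omega>. (\<Prod>i\<in>J. FF t u b b' i (H \<omega> (fst i) (snd i))) \<partial>M)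
      = (\<Prod>i\<in>J. \<integral>\<omega>. FF t u b b' i (H \<omega> (fst i) (snd i)) \<partial>M)"
    by (rule indep_vars_lebesgue_integral[OF _ ind int]) (simp add: J_def)
  also have "\<dots> = (\<Prod>i\<in>J. \<integral>z. FF t u b b' i z \<partial>GM)"
  proof (rule prod.cong[OF refl])
    fix i assume "i \<in> J"
    then have "fst i < B" "snd i < U" using JU by auto
    then show "(\<integral>\<omega>. FF t u b b' i (H \<omega> (fst i) (snd i)) \<partial>M) = (\<integral>z. FF t u b b' i z \<partial>GM)"
      using Hi(1)[of "fst i" "snd i" "FF t u b b' i"] by simp
  qed
  finally show "(\<integral>\<omega>. (\<Prod>i\<in>J. FF t u b b' i (H \<omega> (fst i) (snd i))) \<partial>M)
          = (\<Prod>i\<in>J. \<integral>z. FF t u b b' i z \<partial>GM)" .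
qed

lemma E_key:
  assumes uv: "u \<noteq> v" "u < U" "v < U" and t: "t \<ge> 0"
  shows "has_bochner_integral M (\<lambda>\<omega>. (cmod (\<Sum>b<B. cnj (H \<omega> b u) * H \<omega> b v))\<^sup>2 * exp (- (t * (\<Sum>k<B. (cmod (H \<omega> k u))\<^sup>2))))
           (real B / (1 + t) ^ (B + 1))"
proof -
  define f where "f \<omega> = (cmod (\<Sum>b<B. cnj (H \<omega> b u) * H \<omega> b v))\<^sup>2 * exp (- (t * (\<Sum>k<B. (cmod (H \<omega> k u))\<^sup>2)))" for \<omega>
  define T where "T b b' \<omega> = (\<Prod>i\<in>{..<B} \<times> {u, v}. FF t u b b' i (H \<omega> (fst i) (snd i)))" for b b' \<omega>
  have fT: "complex_of_real (f \<omega>) = (\<Sum>b<B. \<Sum>b'<B. T b b' \<omega>)" for \<omega>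
    unfolding f_def T_def sum_expand using uv
    by (intro sum.cong refl) (simp add: prod_J)
  have intT: "integrable M (T b b')" if "b \<in> {..<B}" "b' \<in> {..<B}" for b b'
    using term_E(1)[OF uv t, of b b'] that by (simp add: T_def[abs_def])
  have intf: "integrable M (\<lambda>\<omega>. complex_of_real (f \<omega>))"
    unfolding fT using intT by (auto intro!: Bochner_Integration.integrable_sum)
  have "(\<integral>\<omega>. complex_of_real (f \<omega>) \<partial>M) = (\<Sum>b<B. \<Sum>b'<B. \<integral>\<omega>. T b b' \<omega> \<partial>M)"
  proof -
    have "(\<integral>\<omega>. (\<Sum>b<B. \<Sum>b'<B. T b b' \<omega>) \<partial>M) = (\<Sum>b<B. \<integral>\<omega>. (\<Sum>b'<B. T b b' \<omega>) \<partial>M)"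
      by (rule Bochner_Integration.integral_sum) (use intT in \<open>auto intro!: Bochner_Integration.integrable_sum\<close>)
    also have "\<dots> = (\<Sum>b<B. \<Sum>b'<B. \<integral>\<omega>. T b b' \<omega> \<partial>M)"
      by (intro sum.cong refl Bochner_Integration.integral_sum) (use intT in auto)
    finally show ?thesis unfolding fT .
  qed
  also have "\<dots> = (\<Sum>b<B. \<Sum>b'<B. if b' = b then complex_of_real (1 / (1 + t) ^ (B + 1)) else 0)"
  proof (intro sum.cong refl)
    fix b b' assume "b \<in> {..<B}" "b' \<in> {..<B}"
    then show "(\<integral>\<omega>. T b b' \<omega> \<partial>M) = (if b' = b then complex_of_real (1 / (1 + t) ^ (B + 1)) else 0)"
      using term_E(2)[OF uv t, of b b'] term_val_eq[OF uv(1) t, of b B] term_val_neq[OF uv(1), of b B b']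
      by (auto simp: T_def)
  qed
  also have "\<dots> = complex_of_real (real B / (1 + t) ^ (B + 1))"
    by simp
  finally have I: "complex_of_real (\<integral>\<omega>. f \<omega> \<partial>M) = complex_of_real (real B / (1 + t) ^ (B + 1))"
    by simp
  have "integrable M f"
    using integrable_bounded_linear[OF bounded_linear_Re intf] by simp
  moreover have "(\<integral>\<omega>. f \<omega> \<partial>M) = real B / (1 + t) ^ (B + 1)"
    using I of_real_eq_iff by blast
  ultimately show ?thesis unfolding f_def[symmetric]
    by (simp add: has_bochner_integral_iff)
qed

end

lemma laplace_inv_sq:
  assumes X: "(X::real) > 0"
  shows "(\<integral>\<^sup>+t. ennreal (t * exp (- (t * X))) * indicator {0..} t \<partial>lborel) = ennreal (1 / X\<^sup>2)"
proof -
  have "(\<integral>\<^sup>+t. ennreal (t * exp (- (t * X))) * indicator {0..} t \<partial>lborel) = ennreal (0 - (- (1 + 0 * X) * exp (- (0 * X)) / X\<^sup>2))"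
  proof (rule nn_integral_FTC_atLeast)
    show "(\<lambda>t. t * exp (- (t * X))) \<in> borel_measurable borel" by measurable
    show "((\<lambda>t. - (1 + t * X) * exp (- (t * X)) / X\<^sup>2) \<longlongrightarrow> 0) at_top"
      using X by real_asymp
    fix t :: real assume "0 \<le> t"
    then show "0 \<le> t * exp (- (t * X))" by simp
    show "((\<lambda>t. - (1 + t * X) * exp (- (t * X)) / X\<^sup>2) has_real_derivative t * exp (- (t * X))) (at t)"
      using X by (auto intro!: derivative_eq_intros simp: field_simps power2_eq_square)
  qed
  then show ?thesis by simp
qed

lemma deriv_inv_pow:
  assumes t: "(t::real) > -1"
  shows "((\<lambda>t. inverse ((1 + t) ^ n)) has_real_derivative (- real n / (1 + t) ^ (n + 1))) (at t)"
proof -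
  have nz: "1 + t \<noteq> 0" using t by simp
  have "((\<lambda>t. inverse ((1 + t) ^ n)) has_real_derivative (- (inverse ((1 + t) ^ n) * (real n * (1 + t) ^ (n - 1) * (0 + 1)) * inverse ((1 + t) ^ n)))) (at t)"
    by (rule derivative_eq_intros refl | use nz in simp)+
  moreover have "- (inverse ((1 + t) ^ n) * (real n * (1 + t) ^ (n - 1) * (0 + 1)) * inverse ((1 + t) ^ n)) = - real n / (1 + t) ^ (n + 1)"
  proof (cases n)
    case 0 then show ?thesis by simp
  next
    case (Suc m)
    define y where "y = 1 + t"
    have y: "y \<noteq> 0" using nz by (simp add: y_def)
    have "inverse (y ^ Suc m) * (real (Suc m) * y ^ m) * inverse (y ^ Suc m) = real (Suc m) / y ^ (Suc m + 1)"
    proof -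
      have "inverse (y ^ Suc m) * y ^ m = inverse y" using y by (simp add: inverse_mult_distrib mult.assoc)
      have r: "inverse (y ^ Suc m) * (real (Suc m) * y ^ m) * inverse (y ^ Suc m) = real (Suc m) * ((inverse (y ^ Suc m) * y ^ m) * inverse (y ^ Suc m))"
        by (simp only: mult_ac)
      then have "inverse (y ^ Suc m) * (real (Suc m) * y ^ m) * inverse (y ^ Suc m) = real (Suc m) * (inverse y * inverse (y ^ Suc m))"
        unfolding r \<open>inverse (y ^ Suc m) * y ^ m = inverse y\<close> .
      also have "\<dots> = real (Suc m) / y ^ (Suc m + 1)"
        by (simp add: divide_inverse inverse_mult_distrib mult_ac)
      finally show ?thesis .
    qed
    then show ?thesis using Suc by (simp add: y_def) (simp add: minus_divide_left)
  qed
  ultimately show ?thesis by simp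
qed

lemma l1: "filterlim (\<lambda>t::real. (1 + t) ^ n) at_top at_top" if "n \<ge> 1" for n :: nat
proof -
  have "filterlim (\<lambda>t::real. 1 + t) at_top at_top" by (rule filterlim_tendsto_add_at_top[OF tendsto_const filterlim_ident])
  then show ?thesis using that by (intro filterlim_pow_at_top) auto
qed

lemma laplace_B:
  assumes B: "B \<ge> (2::nat)"
  shows "(\<integral>\<^sup>+t. ennreal (t * (real B / (1 + t) ^ (B + 1))) * indicator {0..} t \<partial>lborel) = ennreal (1 / (real B - 1))"
proof -
  define c where "c = - real B / (real B - 1)"
  define F where "F t = c * inverse ((1 + t) ^ (B - 1)) + inverse ((1 + t) ^ B)" for t :: real
  have F0: "F 0 = - 1 / (real B - 1)"
    using B by (simp add: F_def c_def field_simps)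
  have "(\<integral>\<^sup>+t. ennreal (t * (real B / (1 + t) ^ (B + 1))) * indicator {0..} t \<partial>lborel) = ennreal (0 - F 0)"
  proof (rule nn_integral_FTC_atLeast)
    show "(\<lambda>t. t * (real B / (1 + t) ^ (B + 1))) \<in> borel_measurable borel" by measurable
    show "(F \<longlongrightarrow> 0) at_top"
    proof -
      have a: "((\<lambda>t::real. inverse ((1 + t) ^ (B - 1))) \<longlongrightarrow> 0) at_top"
        by (rule tendsto_inverse_0_at_top) (use l1 B in auto)
      have b: "((\<lambda>t::real. inverse ((1 + t) ^ B)) \<longlongrightarrow> 0) at_top"
        by (rule tendsto_inverse_0_at_top) (use l1 B in auto)
      have "((\<lambda>t::real. c * inverse ((1 + t) ^ (B - 1)) + inverse ((1 + t) ^ B)) \<longlongrightarrow> c * 0 + 0) at_top"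
        by (intro tendsto_intros a b)
      then show ?thesis by (simp add: F_def[abs_def])
    qed
    fix t :: real assume t: "0 \<le> t"
    then show "0 \<le> t * (real B / (1 + t) ^ (B + 1))" by simp
    have t1: "t > -1" using t by simp
    have d: "(F has_real_derivative c * (- real (B - 1) / (1 + t) ^ (B - 1 + 1)) + (- real B / (1 + t) ^ (B + 1))) (at t)"
      unfolding F_def[abs_def]
      by (intro DERIV_add DERIV_cmult deriv_inv_pow t1)
    have e: "c * (- real (B - 1) / (1 + t) ^ (B - 1 + 1)) + (- real B / (1 + t) ^ (B + 1)) = t * (real B / (1 + t) ^ (B + 1))"
    proof -
      have B1: "B - 1 + 1 = B" "real (B - 1) = real B - 1" using B by auto
      have nz: "real B - 1 \<noteq> 0" using B by simp
      have p: "(1 + t) ^ (B + 1) = (1 + t) ^ B * (1 + t)" by simp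
      have pos: "(1 + t) ^ B > 0" using t by simp
      define P where "P = (1 + t) ^ B"
      have y: "1 + t > 0" using t by simp
      have e1: "- real B / (real B - 1) * (- (real B - 1) / P) = real B / P"
        using nz pos unfolding P_def[symmetric] by (simp add: field_simps)
      have e2: "real B / P + - real B / (P * (1 + t)) = t * (real B / (P * (1 + t)))"
      proof -
        have Pp: "P > 0" using pos by (simp add: P_def)
        have h: "(real B * (1 + t)) / (P * (1 + t)) = real B / P" using y by simp
        have "real B / P + - real B / (P * (1 + t)) = (real B * (1 + t) + - real B) / (P * (1 + t))"
          unfolding add_divide_distrib h by simp
        also have "\<dots> = t * (real B / (P * (1 + t)))"
          by (simp add: algebra_simps)
        finally show ?thesis .
      qed
      show ?thesis unfolding B1 c_def p P_def[symmetric] e1 e2 ..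
    qed
    show "(F has_real_derivative t * (real B / (1 + t) ^ (B + 1))) (at t)"
      using d unfolding e .
  qed
  then show ?thesis using F0 by simp
qed

context
  fixes M :: "'a measure" and H :: "'a \<Rightarrow> nat \<Rightarrow> nat \<Rightarrow> complex" and B U :: nat
  assumes P: "prob_space M"
    and IND: "prob_space.indep_vars M (\<lambda>_. borel) (\<lambda>(b, u) \<omega>. H \<omega> b u) ({..<B} \<times> {..<U})"
    and DIS: "\<And>b u. b < B \<Longrightarrow> u < U \<Longrightarrow> distributed M lborel (\<lambda>\<omega>. H \<omega> b u) cgauss_density"
begin

interpretation prob_space M by (rule P)

lemmas Hm' = Hmeas[OF P IND DIS]
lemmas EK = E_key[OF P IND DIS]

lemma pair_bound:
  assumes uv: "u \<noteq> v" "u < U" "v < U" and c: "c \<ge> 0" and B2: "B \<ge> 2"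
  shows "(\<integral>\<^sup>+\<omega>. ennreal ((cmod (\<Sum>b<B. cnj (H \<omega> b u) * H \<omega> b v))\<^sup>2 / ((\<Sum>k<B. (cmod (H \<omega> k u))\<^sup>2) + c)\<^sup>2) \<partial>M)
         \<le> ennreal (1 / (real B - 1))"
proof -
  define S where "S \<omega> = cmod (\<Sum>b<B. cnj (H \<omega> b u) * H \<omega> b v)" for \<omega>
  define X where "X \<omega> = (\<Sum>k<B. (cmod (H \<omega> k u))\<^sup>2)" for \<omega>
  have Sm[measurable]: "S \<in> borel_measurable M"
    unfolding S_def by (intro measurable_compose[OF _ borel_measurable_norm] borel_measurable_sum borel_measurable_times measurable_compose[OF _ cnj_meas]) (use Hm' uv in auto)
  have Xm[measurable]: "X \<in> borel_measurable M"
    unfolding X_def by (intro borel_measurable_sum borel_measurable_power measurable_compose[OF _ borel_measurable_norm]) (use Hm' uv in auto)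
  define L where "L x = (\<integral>\<^sup>+t. ennreal (t * exp (- (t * x))) * indicator {0..} t \<partial>lborel)" for x
  have pw: "ennreal ((S \<omega>)\<^sup>2 / (X \<omega> + c)\<^sup>2) \<le> ennreal ((S \<omega>)\<^sup>2) * L (X \<omega>)" for \<omega>
  proof (cases "X \<omega> = 0")
    case True
    then have "\<forall>k\<in>{..<B}. (cmod (H \<omega> k u))\<^sup>2 = 0"
      unfolding X_def by (subst sum_nonneg_eq_0_iff[symmetric]) auto
    then have "S \<omega> = 0" unfolding S_def by simp
    then show ?thesis by simp
  next
    case False
    then have Xp: "X \<omega> > 0" unfolding X_def by (metis order_le_less sum_nonneg zero_le_power2)
    have "L (X \<omega>) = ennreal (1 / (X \<omega>)\<^sup>2)" unfolding L_def by (rule laplace_inv_sq[OF Xp])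
    moreover have "(S \<omega>)\<^sup>2 / (X \<omega> + c)\<^sup>2 \<le> (S \<omega>)\<^sup>2 * (1 / (X \<omega>)\<^sup>2)"
    proof -
      have "(X \<omega>)\<^sup>2 \<le> (X \<omega> + c)\<^sup>2" using Xp c by (intro power_mono) auto
      then have "1 / (X \<omega> + c)\<^sup>2 \<le> 1 / (X \<omega>)\<^sup>2" using Xp c by (intro divide_left_mono) (auto intro: mult_pos_pos)
      then show ?thesis by (simp add: divide_inverse mult_left_mono)
    qed
    ultimately show ?thesis by (simp add: ennreal_mult[symmetric] ennreal_leI)
  qed
  interpret PS: pair_sigma_finite M lborel ..
  define g where "g \<omega> t = ennreal ((S \<omega>)\<^sup>2 * (t * exp (- (t * X \<omega>)))) * indicator {0..} t" for \<omega> t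
  have gm: "case_prod g \<in> borel_measurable (M \<Otimes>\<^sub>M lborel)"
    unfolding g_def by measurable
  have "(\<integral>\<^sup>+\<omega>. ennreal ((S \<omega>)\<^sup>2 / (X \<omega> + c)\<^sup>2) \<partial>M) \<le> (\<integral>\<^sup>+\<omega>. ennreal ((S \<omega>)\<^sup>2) * L (X \<omega>) \<partial>M)"
    by (intro nn_integral_mono pw)
  also have "\<dots> = (\<integral>\<^sup>+\<omega>. \<integral>\<^sup>+t. g \<omega> t \<partial>lborel \<partial>M)"
  proof (intro nn_integral_cong)
    fix \<omega>
    show "ennreal ((S \<omega>)\<^sup>2) * L (X \<omega>) = (\<integral>\<^sup>+t. g \<omega> t \<partial>lborel)"
      unfolding L_def g_def
      by (subst nn_integral_cmult[symmetric]) (auto simp: ennreal_mult' mult.assoc)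
  qed
  also have "\<dots> = (\<integral>\<^sup>+t. \<integral>\<^sup>+\<omega>. g \<omega> t \<partial>M \<partial>lborel)"
    by (rule PS.Fubini'[OF gm, symmetric])
  also have "\<dots> = (\<integral>\<^sup>+t. ennreal (t * (real B / (1 + t) ^ (B + 1))) * indicator {0..} t \<partial>lborel)"
  proof (intro nn_integral_cong)
    fix t :: real
    show "(\<integral>\<^sup>+\<omega>. g \<omega> t \<partial>M) = ennreal (t * (real B / (1 + t) ^ (B + 1))) * indicator {0..} t"
    proof (cases "t \<ge> 0")
      case False then show ?thesis by (simp add: g_def)
    next
      case True
      have hb: "has_bochner_integral M (\<lambda>\<omega>. t * ((S \<omega>)\<^sup>2 * exp (- (t * X \<omega>)))) (t * (real B / (1 + t) ^ (B + 1)))"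
      proof -
        have "has_bochner_integral M (\<lambda>\<omega>. (cmod (\<Sum>b<B. cnj (H \<omega> b u) * H \<omega> b v))\<^sup>2 * exp (- (t * (\<Sum>k<B. (cmod (H \<omega> k u))\<^sup>2))))
           (real B / (1 + t) ^ (B + 1))"
          by (rule EK) (use uv True in auto)
        then show ?thesis unfolding S_def X_def by (rule has_bochner_integral_mult_right)
      qed
      have "(\<integral>\<^sup>+\<omega>. g \<omega> t \<partial>M) = (\<integral>\<^sup>+\<omega>. ennreal (t * ((S \<omega>)\<^sup>2 * exp (- (t * X \<omega>)))) \<partial>M)"
        using True by (simp add: g_def mult_ac)
      also have "\<dots> = ennreal (t * (real B / (1 + t) ^ (B + 1)))"
        using hb True by (subst nn_integral_eq_integral) (auto simp: has_bochner_integral_iff)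
      finally show ?thesis using True by simp
    qed
  qed
  also have "\<dots> = ennreal (1 / (real B - 1))"
    by (rule laplace_B[OF B2])
  finally show ?thesis unfolding S_def X_def .
qed
end

lemma reg_gram_diag:
  "reg_gram B c h u u = complex_of_real ((\<Sum>k<B. (cmod (h k u))\<^sup>2) + c)"
proof -
  have "(\<Sum>b<B. cnj (h b u) * h b u) = (\<Sum>b<B. complex_of_real ((cmod (h b u))\<^sup>2))"
    by (intro sum.cong refl) (simp only: cnj_mult_self)
  then show ?thesis by (simp add: reg_gram_def)
qed

lemma frob_formula:
  assumes c: "c \<ge> 0"
  shows "frob_norm U U (sq_mult U (diag_inv (diag_part (reg_gram B c h))) (hollow_part (reg_gram B c h)))
    = sqrt (\<Sum>u<U. \<Sum>v<U. if u = v then 0 else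
         (cmod (\<Sum>b<B. cnj (h b u) * h b v))\<^sup>2 / ((\<Sum>k<B. (cmod (h k u))\<^sup>2) + c)\<^sup>2)"
  unfolding frob_norm_def
proof (intro arg_cong[where f=sqrt] sum.cong refl)
  fix u v assume u: "u \<in> {..<U}" and v: "v \<in> {..<U}"
  define A where "A = reg_gram B c h"
  have sm: "sq_mult U (diag_inv (diag_part A)) (hollow_part A) u v = inverse (A u u) * hollow_part A u v"
  proof -
    have e: "(if u = k then inverse (if u = u then A u u else 0) else 0) * hollow_part A k v
       = (if u = k then inverse (A u u) * hollow_part A u v else 0)" for k
      by simp
    show ?thesis unfolding sq_mult_def diag_inv_def diag_part_def e using u by simp
  qed
  have X0: "0 \<le> (\<Sum>k<B. (cmod (h k u))\<^sup>2) + c" using c by (simp add: sum_nonneg)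
  show "(cmod (sq_mult U (diag_inv (diag_part (reg_gram B c h))) (hollow_part (reg_gram B c h)) u v))\<^sup>2 =
    (if u = v then 0 else (cmod (\<Sum>b<B. cnj (h b u) * h b v))\<^sup>2 / ((\<Sum>k<B. (cmod (h k u))\<^sup>2) + c)\<^sup>2)"
  proof (cases "u = v")
    case True
    then show ?thesis using sm by (simp add: A_def hollow_part_def diag_part_def)
  next
    case False
    have "hollow_part A u v = (\<Sum>b<B. cnj (h b u) * h b v)"
      using False by (simp add: A_def hollow_part_def diag_part_def reg_gram_def)
    moreover have "cmod (A u u) = (\<Sum>k<B. (cmod (h k u))\<^sup>2) + c"
      unfolding A_def reg_gram_diag norm_of_real using X0 by (rule abs_of_nonneg)
    ultimately show ?thesis using False sm
      by (simp add: A_def norm_mult norm_inverse power_mult_distrib power_inverse divide_inverse mult.commute del: norm_of_real)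
  qed
qed

lemma count_pairs:
  fixes x :: real
  shows "(\<Sum>u<U. \<Sum>v<U. if u = v then 0 else x) = (real U ^ 2 - real U) * x"
proof -
  have "(\<Sum>v<U. if u = v then 0 else x) = real U * x - x" if "u < U" for u
  proof -
    have "(\<Sum>v<U. if u = v then 0 else x) = (\<Sum>v<U. x - (if u = v then x else 0))"
      by (intro sum.cong) auto
    also have "\<dots> = real U * x - x" using that by (simp add: sum_subtractf)
    finally show ?thesis .
  qed
  then have "(\<Sum>u<U. \<Sum>v<U. if u = v then 0 else x) = (\<Sum>u<U. real U * x - x)"
    by (intro sum.cong) auto
  also have "\<dots> = (real U ^ 2 - real U) * x" by (simp add: algebra_simps power2_eq_square)
  finally show ?thesis .
qed

lemma powr_equiv:
  assumes y: "(y::real) \<ge> 0" and K: "K \<ge> (1::nat)" and a: "\<alpha> > 0"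
  shows "(sqrt y) ^ K < \<alpha> \<longleftrightarrow> y < \<alpha> powr (2 / real K)"
proof (cases "y = 0")
  case True
  then show ?thesis using a K by (simp add: power_0_left)
next
  case False
  then have yp: "y > 0" using y by simp
  have Kp: "real K > 0" using K by simp
  have e: "(sqrt y) ^ K = y powr (real K / 2)"
    using yp by (simp add: sqrt_def root_powr_inverse powr_realpow[symmetric] powr_powr)
  show ?thesis
  proof
    assume "(sqrt y) ^ K < \<alpha>"
    then have "y powr (real K / 2) < \<alpha>" by (simp add: e)
    then have "(y powr (real K / 2)) powr (2 / real K) < \<alpha> powr (2 / real K)"
      using yp Kp by (intro powr_less_mono2) auto
    then show "y < \<alpha> powr (2 / real K)" using Kp by (simp add: powr_powr)
  next
    assume "y < \<alpha> powr (2 / real K)"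
    then have "y powr (real K / 2) < (\<alpha> powr (2 / real K)) powr (real K / 2)"
      using yp Kp by (intro powr_less_mono2) auto
    then show "(sqrt y) ^ K < \<alpha>" using Kp a by (simp add: e powr_powr)
  qed
qed

lemma final_ineq:
  assumes B: "B > (4::nat)"
  shows "1 / (real B - 1) \<le> sqrt (2 * real B * (real B + 1) / ((real B - 1) * (real B - 2) * (real B - 3) * (real B - 4)))"
proof (rule real_le_rsqrt)
  define b where "b = real B"
  have b4: "b > 4" using B by (simp add: b_def)
  define Q where "Q = (b - 2) * (b - 3) * (b - 4)"
  define N where "N = 2 * b * (b + 1)"
  have Qp: "Q > 0" using b4 by (simp add: Q_def)
  have b1: "b - 1 > 0" using b4 by simp
  have QN: "Q \<le> N * (b - 1)"
  proof -
    have "N * (b - 1) - Q = b^3 + 9 * b^2 - 28 * b + 24"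
      by (simp add: N_def Q_def algebra_simps power2_eq_square power3_eq_cube)
    also have "\<dots> > 0"
    proof -
      have "28 * b \<le> 9 * b^2" using b4 by (simp add: power2_eq_square)
      moreover have "b^3 > 0" using b4 by simp
      ultimately show ?thesis by linarith
    qed
    finally show ?thesis by simp
  qed
  have "(1 / (b - 1))\<^sup>2 \<le> N / ((b - 1) * Q)"
  proof -
    have "(1 / (b - 1))\<^sup>2 = (1 / (b - 1)) / (b - 1)" by (simp add: power2_eq_square)
    also have "\<dots> \<le> (N / Q) / (b - 1)"
    proof (rule divide_right_mono)
      show "1 / (b - 1) \<le> N / Q" using QN Qp b1 by (simp add: divide_simps mult.commute)
    qed (use b1 in simp)
    also have "\<dots> = N / ((b - 1) * Q)" by simp
    finally show ?thesis .
  qed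
  then show "(1 / (real B - 1))\<^sup>2 \<le> 2 * real B * (real B + 1) / ((real B - 1) * (real B - 2) * (real B - 3) * (real B - 4))"
    by (simp add: b_def N_def Q_def mult.assoc)
qed

context
  fixes M :: "'a measure" and H :: "'a \<Rightarrow> nat \<Rightarrow> nat \<Rightarrow> complex" and B U :: nat
  assumes P: "prob_space M"
    and IND: "prob_space.indep_vars M (\<lambda>_. borel) (\<lambda>(b, u) \<omega>. H \<omega> b u) ({..<B} \<times> {..<U})"
    and DIS: "\<And>b u. b < B \<Longrightarrow> u < U \<Longrightarrow> distributed M lborel (\<lambda>\<omega>. H \<omega> b u) cgauss_density"
begin

interpretation prob_space M by (rule P)

lemmas Hm'' = Hmeas[OF P IND DIS]

lemma F_markov:
  fixes c a :: real
  assumes c: "c \<ge> 0" and B2: "B \<ge> 2" and a: "a > 0"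
  defines "T \<equiv> \<lambda>u v \<omega>. if u = v then 0 else
         (cmod (\<Sum>b<B. cnj (H \<omega> b u) * H \<omega> b v))\<^sup>2 / ((\<Sum>k<B. (cmod (H \<omega> k u))\<^sup>2) + c)\<^sup>2"
  shows "measure M {\<omega> \<in> space M. a \<le> (\<Sum>u<U. \<Sum>v<U. T u v \<omega>)} \<le> (real U ^ 2 - real U) * (1 / (real B - 1)) / a"
    and "(\<lambda>\<omega>. \<Sum>u<U. \<Sum>v<U. T u v \<omega>) \<in> borel_measurable M"
proof -
  have Tm: "T u v \<in> borel_measurable M" if "u < U" "v < U" for u v
  proof -
    have Sm: "(\<lambda>\<omega>. cmod (\<Sum>b<B. cnj (H \<omega> b u) * H \<omega> b v)) \<in> borel_measurable M"
      by (intro measurable_compose[OF _ borel_measurable_norm] borel_measurable_sum borel_measurable_times measurable_compose[OF _ cnj_meas]) (use Hm'' that in auto)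
    have Xm: "(\<lambda>\<omega>. \<Sum>k<B. (cmod (H \<omega> k u))\<^sup>2) \<in> borel_measurable M"
      by (intro borel_measurable_sum borel_measurable_power measurable_compose[OF _ borel_measurable_norm]) (use Hm'' that in auto)
    show ?thesis unfolding T_def using Sm Xm by measurable
  qed
  show Fm: "(\<lambda>\<omega>. \<Sum>u<U. \<Sum>v<U. T u v \<omega>) \<in> borel_measurable M"
    using Tm by (auto intro!: borel_measurable_sum)
  have Tnn: "0 \<le> T u v \<omega>" for u v \<omega> by (simp add: T_def)
  have Tint: "integrable M (T u v) \<and> (\<integral>\<omega>. T u v \<omega> \<partial>M) \<le> (if u = v then 0 else 1 / (real B - 1))"
    if uv: "u < U" "v < U" for u v
  proof (cases "u = v")
    case True
    then have "T u v = (\<lambda>_. 0)" by (simp add: T_def fun_eq_iff)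
    then show ?thesis using True by simp
  next
    case False
    have nn: "(\<integral>\<^sup>+\<omega>. ennreal (T u v \<omega>) \<partial>M) \<le> ennreal (1 / (real B - 1))"
      using pair_bound[OF P IND DIS False uv c B2] False by (simp add: T_def)
    have int: "integrable M (T u v)"
    proof (rule integrableI_bounded)
      show "T u v \<in> borel_measurable M" by (rule Tm[OF uv])
      have "(\<integral>\<^sup>+\<omega>. ennreal (norm (T u v \<omega>)) \<partial>M) = (\<integral>\<^sup>+\<omega>. ennreal (T u v \<omega>) \<partial>M)"
        using Tnn by simp
      also have "\<dots> < \<infinity>" using nn by (simp add: le_less_trans)
      finally show "(\<integral>\<^sup>+\<omega>. ennreal (norm (T u v \<omega>)) \<partial>M) < \<infinity>" .
    qed
    have "ennreal (\<integral>\<omega>. T u v \<omega> \<partial>M) \<le> ennreal (1 / (real B - 1))"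
      using nn int Tnn by (subst nn_integral_eq_integral[symmetric]) auto
    then have "(\<integral>\<omega>. T u v \<omega> \<partial>M) \<le> 1 / (real B - 1)"
      using B2 by (subst (asm) ennreal_le_iff) auto
    then show ?thesis using int False by simp
  qed
  have Fint: "integrable M (\<lambda>\<omega>. \<Sum>u<U. \<Sum>v<U. T u v \<omega>)"
    using Tint by (auto intro!: Bochner_Integration.integrable_sum)
  have "(\<integral>\<omega>. (\<Sum>u<U. \<Sum>v<U. T u v \<omega>) \<partial>M) = (\<Sum>u<U. \<Sum>v<U. \<integral>\<omega>. T u v \<omega> \<partial>M)"
  proof -
    have "(\<integral>\<omega>. (\<Sum>u<U. \<Sum>v<U. T u v \<omega>) \<partial>M) = (\<Sum>u<U. \<integral>\<omega>. (\<Sum>v<U. T u v \<omega>) \<partial>M)"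
      by (rule Bochner_Integration.integral_sum) (use Tint in \<open>auto intro!: Bochner_Integration.integrable_sum\<close>)
    also have "\<dots> = (\<Sum>u<U. \<Sum>v<U. \<integral>\<omega>. T u v \<omega> \<partial>M)"
      by (intro sum.cong refl Bochner_Integration.integral_sum) (use Tint in auto)
    finally show ?thesis .
  qed
  also have "\<dots> \<le> (\<Sum>u<U. \<Sum>v<U. if u = v then 0 else 1 / (real B - 1))"
    using Tint by (intro sum_mono) auto
  also have "\<dots> = (real U ^ 2 - real U) * (1 / (real B - 1))"
    by (rule count_pairs)
  finally have IF: "(\<integral>\<omega>. (\<Sum>u<U. \<Sum>v<U. T u v \<omega>) \<partial>M) \<le> (real U ^ 2 - real U) * (1 / (real B - 1))" .
  have "measure M {\<omega> \<in> space M. a \<le> (\<Sum>u<U. \<Sum>v<U. T u v \<omega>)} \<le> (\<integral>\<omega>. (\<Sum>u<U. \<Sum>v<U. T u v \<omega>) \<partial>M) / a"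
    by (rule integral_Markov_inequality_measure[OF Fint _ _ a]) (auto simp: Tnn sum_nonneg)
  also have "\<dots> \<le> (real U ^ 2 - real U) * (1 / (real B - 1)) / a"
    using IF a by (intro divide_right_mono) auto
  finally show "measure M {\<omega> \<in> space M. a \<le> (\<Sum>u<U. \<Sum>v<U. T u v \<omega>)} \<le> (real U ^ 2 - real U) * (1 / (real B - 1)) / a" .
qed

end

theorem theorem1:
  fixes M :: "'a measure"
    and H :: "'a \<Rightarrow> nat \<Rightarrow> nat \<Rightarrow> complex"
    and B U K :: nat
    and N0 Es \<alpha> :: real
  assumes "prob_space M"
    and "B > 4" and "U \<ge> 1"
    and "N0 \<ge> 0" and "Es > 0"
    and "K \<ge> 1" and "\<alpha> > 0"
    and "prob_space.indep_vars M (\<lambda>_. borel) (\<lambda>(b, u) \<omega>. H \<omega> b u) ({..<B} \<times> {..<U})"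
    and "\<And>b u. b < B \<Longrightarrow> u < U \<Longrightarrow> distributed M lborel (\<lambda>\<omega>. H \<omega> b u) cgauss_density"
  shows "measure M {\<omega> \<in> space M.
            (frob_norm U U (sq_mult U (diag_inv (diag_part (reg_gram B (N0 / Es) (H \<omega>))))
                                      (hollow_part (reg_gram B (N0 / Es) (H \<omega>))))) ^ K < \<alpha>}
         \<ge> 1 - (real U ^ 2 - real U) / (\<alpha> powr (2 / real K))
               * sqrt (2 * real B * (real B + 1)
                       / ((real B - 1) * (real B - 2) * (real B - 3) * (real B - 4)))"
proof -
  note P = assms(1) and IND = assms(8) and DIS = assms(9)
  interpret prob_space M by (rule P)
  define c where "c = N0 / Es"
  have c: "c \<ge> 0" using assms(4,5) by (simp add: c_def)
  define a where "a = \<alpha> powr (2 / real K)"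
  have a: "a > 0" using assms(7) by (simp add: a_def)
  have B2: "B \<ge> 2" using assms(2) by simp
  define F where "F \<omega> = (\<Sum>u<U. \<Sum>v<U. if u = v then 0 else
         (cmod (\<Sum>b<B. cnj (H \<omega> b u) * H \<omega> b v))\<^sup>2 / ((\<Sum>k<B. (cmod (H \<omega> k u))\<^sup>2) + c)\<^sup>2)" for \<omega>
  have Fnn: "F \<omega> \<ge> 0" for \<omega> unfolding F_def by (intro sum_nonneg) auto
  have FM: "measure M {\<omega> \<in> space M. a \<le> F \<omega>} \<le> (real U ^ 2 - real U) * (1 / (real B - 1)) / a"
    using F_markov(1)[OF P IND DIS c B2 a] unfolding F_def .
  have Fm: "F \<in> borel_measurable M"
    using F_markov(2)[OF P IND DIS c B2 a] unfolding F_def[abs_def] .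
  have frob: "frob_norm U U (sq_mult U (diag_inv (diag_part (reg_gram B (N0 / Es) (H \<omega>))))
                                      (hollow_part (reg_gram B (N0 / Es) (H \<omega>)))) = sqrt (F \<omega>)" for \<omega>
    unfolding F_def c_def[symmetric] by (rule frob_formula[OF c])
  have set_eq: "{\<omega> \<in> space M.
            (frob_norm U U (sq_mult U (diag_inv (diag_part (reg_gram B (N0 / Es) (H \<omega>))))
                                      (hollow_part (reg_gram B (N0 / Es) (H \<omega>))))) ^ K < \<alpha>}
      = space M - {\<omega> \<in> space M. a \<le> F \<omega>}"
    by (auto simp: frob a_def powr_equiv[OF Fnn assms(6,7)] not_le)
  have ev: "{\<omega> \<in> space M. a \<le> F \<omega>} \<in> events"
  proof -
    note Fm[measurable]
    show ?thesis by measurable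
  qed
  have "measure M {\<omega> \<in> space M.
            (frob_norm U U (sq_mult U (diag_inv (diag_part (reg_gram B (N0 / Es) (H \<omega>))))
                                      (hollow_part (reg_gram B (N0 / Es) (H \<omega>))))) ^ K < \<alpha>}
      = 1 - measure M {\<omega> \<in> space M. a \<le> F \<omega>}"
    unfolding set_eq by (rule prob_compl[OF ev])
  moreover have "(real U ^ 2 - real U) * (1 / (real B - 1)) / a
      \<le> (real U ^ 2 - real U) / a * sqrt (2 * real B * (real B + 1)
                       / ((real B - 1) * (real B - 2) * (real B - 3) * (real B - 4)))"
  proof -
    have U0: "real U ^ 2 - real U \<ge> 0"
      using assms(3) by (simp add: power2_eq_square)
    have "(real U ^ 2 - real U) * (1 / (real B - 1)) / a = (real U ^ 2 - real U) / a * (1 / (real B - 1))"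
      by simp
    also have "\<dots> \<le> (real U ^ 2 - real U) / a * sqrt (2 * real B * (real B + 1)
                       / ((real B - 1) * (real B - 2) * (real B - 3) * (real B - 4)))"
      using U0 a final_ineq[OF assms(2)] by (intro mult_left_mono) auto
    finally show ?thesis .
  qed
  ultimately show ?thesis using FM unfolding a_def by linarith
qed

end
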